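(* Let $(Z,Z_{ac})$ be an accretive matrix-ordered vector space and let $V=\operatorname{span}_{\mathbb{C}}Z_{sa}^1$. Then for each $n$: (i) $\operatorname{span}_{\mathbb{C}}Z_{sa}^n=M_n(V)$, and there exists a unique conjugate-linear involution $*$ on $M_n(V)$ such that $z^*=z$ for every $z\in Z_{sa}^n$; (ii) if $z=[z_{kl}]\in M_n(V)$ then $z^*=[z_{lk}^*]$ (the transpose of the entrywise adjoint, with $*$ on $V=M_1(V)$ from (i)); (iii) for $z\in M_n(V)$, $z\in Z_{ac}^n$ if and only if $\operatorname{Re}(z):=\frac12(z+z^* )\in Z_+^n$; (iv) each $Z_+^n$ is proper, i.e. $Z_+^n\cap-Z_+^n=\{0\}$.
   Context: For a complex vector space $Z$, $M_n(Z)$ is the $n\times n$ matrices over $Z$. A cone is a set $C$ with $C+C\subseteq C$, $tC\subseteq C$ ($t\ge0$); a matrix cone is a sequence of cones $C_n\subseteq M_n(Z)$ with $X^*C_nX\subseteq C_k$ for all scalar $X\in M_{n,k}$; it is $\mathbb{C}$-proper if $C_1\cap-C_1\cap iC_1\cap-iC_1=\{0\}$, and then $(Z,Z_{ac})$, $Z_{ac}=\{Z_{ac}^n\}$, is an accretive matrix-ordered vector space. Set $Z_{sa}^n=iZ_{ac}^n\cap-iZ_{ac}^n$ and $Z_+^n=Z_{sa}^n\cap Z_{ac}^n$. *)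

theory Defs
  imports Complex_Main "HOL-Library.Function_Algebras"
begin

text \<open>A complex vector space Z is modelled as a type 'z :: ab_group_add together with a
scalar multiplication scl :: complex => 'z => 'z satisfying the locale vector_space scl.
An n x n matrix over Z is a function nat => nat => 'z vanishing outside {..<n} x {..<n};
addition / zero / negation of matrices are pointwise (HOL-Library.Function_Algebras).\<close>

definition mats :: "nat \<Rightarrow> (nat \<Rightarrow> nat \<Rightarrow> 'z::zero) set" where
  "mats n = {A. \<forall>i j. \<not> (i < n \<and> j < n) \<longrightarrow> A i j = 0}"

definition matsV :: "nat \<Rightarrow> 'z::zero set \<Rightarrow> (nat \<Rightarrow> nat \<Rightarrow> 'z) set" where
  "matsV n V = {A \<in> mats n. \<forall>i<n. \<forall>j<n. A i j \<in> V}"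

definition mscale :: "(complex \<Rightarrow> 'z \<Rightarrow> 'z) \<Rightarrow> complex \<Rightarrow> (nat \<Rightarrow> nat \<Rightarrow> 'z) \<Rightarrow> (nat \<Rightarrow> nat \<Rightarrow> 'z)" where
  "mscale scl c A = (\<lambda>i j. scl c (A i j))"

text \<open>X^* A X for a scalar n x k matrix X and A in M_n(Z); the result lies in M_k(Z).\<close>
definition matcong :: "(complex \<Rightarrow> 'z \<Rightarrow> 'z) \<Rightarrow> nat \<Rightarrow> nat \<Rightarrow> (nat \<Rightarrow> nat \<Rightarrow> complex)
    \<Rightarrow> (nat \<Rightarrow> nat \<Rightarrow> 'z::comm_monoid_add) \<Rightarrow> (nat \<Rightarrow> nat \<Rightarrow> 'z)" where
  "matcong scl n k X A = (\<lambda>i j. if i < k \<and> j < k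
      then (\<Sum>p<n. \<Sum>q<n. scl (cnj (X p i) * X q j) (A p q)) else 0)"

definition is_cone :: "(complex \<Rightarrow> 'z \<Rightarrow> 'z) \<Rightarrow> (nat \<Rightarrow> nat \<Rightarrow> 'z::plus) set \<Rightarrow> bool" where
  "is_cone scl K \<longleftrightarrow> (\<forall>a\<in>K. \<forall>b\<in>K. a + b \<in> K) \<and>
     (\<forall>t::real. t \<ge> 0 \<longrightarrow> (\<forall>a\<in>K. mscale scl (complex_of_real t) a \<in> K))"

definition matrix_cone :: "(complex \<Rightarrow> 'z \<Rightarrow> 'z) \<Rightarrow> (nat \<Rightarrow> (nat \<Rightarrow> nat \<Rightarrow> 'z::comm_monoid_add) set) \<Rightarrow> bool" where
  "matrix_cone scl C \<longleftrightarrow>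
     (\<forall>n\<ge>1. C n \<subseteq> mats n \<and> is_cone scl (C n)) \<and>
     (\<forall>n\<ge>1. \<forall>k\<ge>1. \<forall>X. \<forall>A\<in>C n. matcong scl n k X A \<in> C k)"

definition C_proper :: "(complex \<Rightarrow> 'z \<Rightarrow> 'z) \<Rightarrow> (nat \<Rightarrow> (nat \<Rightarrow> nat \<Rightarrow> 'z::ab_group_add) set) \<Rightarrow> bool" where
  "C_proper scl C \<longleftrightarrow>
     C 1 \<inter> uminus ` C 1 \<inter> mscale scl \<i> ` C 1 \<inter> mscale scl (- \<i>) ` C 1 = {0}"

definition accretive_mos :: "(complex \<Rightarrow> 'z \<Rightarrow> 'z) \<Rightarrow> (nat \<Rightarrow> (nat \<Rightarrow> nat \<Rightarrow> 'z::ab_group_add) set) \<Rightarrow> bool" where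
  "accretive_mos scl C \<longleftrightarrow> vector_space scl \<and> matrix_cone scl C \<and> C_proper scl C"

definition Zsa :: "(complex \<Rightarrow> 'z \<Rightarrow> 'z) \<Rightarrow> (nat \<Rightarrow> (nat \<Rightarrow> nat \<Rightarrow> 'z) set) \<Rightarrow> nat \<Rightarrow> (nat \<Rightarrow> nat \<Rightarrow> 'z) set" where
  "Zsa scl C n = mscale scl \<i> ` C n \<inter> mscale scl (- \<i>) ` C n"

definition Zplus :: "(complex \<Rightarrow> 'z \<Rightarrow> 'z) \<Rightarrow> (nat \<Rightarrow> (nat \<Rightarrow> nat \<Rightarrow> 'z) set) \<Rightarrow> nat \<Rightarrow> (nat \<Rightarrow> nat \<Rightarrow> 'z) set" where
  "Zplus scl C n = Zsa scl C n \<inter> C n"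

text \<open>V = complex span of Z_sa^1 (identifying M_1(Z) with Z via the (0,0) entry).\<close>
definition Vspace :: "(complex \<Rightarrow> 'z::ab_group_add \<Rightarrow> 'z) \<Rightarrow> (nat \<Rightarrow> (nat \<Rightarrow> nat \<Rightarrow> 'z) set) \<Rightarrow> 'z set" where
  "Vspace scl C = module.span scl {A 0 0 | A. A \<in> Zsa scl C 1}"

definition entry1 :: "'z \<Rightarrow> (nat \<Rightarrow> nat \<Rightarrow> 'z::zero)" where
  "entry1 v = (\<lambda>i j. if i = 0 \<and> j = 0 then v else 0)"

definition is_conj_inv :: "(complex \<Rightarrow> 'z \<Rightarrow> 'z) \<Rightarrow> nat \<Rightarrow> 'z::ab_group_add set
    \<Rightarrow> ((nat \<Rightarrow> nat \<Rightarrow> 'z) \<Rightarrow> (nat \<Rightarrow> nat \<Rightarrow> 'z)) \<Rightarrow> bool" where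
  "is_conj_inv scl n V f \<longleftrightarrow>
     (\<forall>z\<in>matsV n V. f z \<in> matsV n V) \<and>
     (\<forall>z\<in>matsV n V. \<forall>w\<in>matsV n V. f (z + w) = f z + f w) \<and>
     (\<forall>c. \<forall>z\<in>matsV n V. f (mscale scl c z) = mscale scl (cnj c) (f z)) \<and>
     (\<forall>z\<in>matsV n V. f (f z) = z)"

end

theory Submission imports Defs begin

definition qf :: "(complex \<Rightarrow> 'z \<Rightarrow> 'z) \<Rightarrow> nat \<Rightarrow> (nat \<Rightarrow> nat \<Rightarrow> 'z::comm_monoid_add) \<Rightarrow> (nat \<Rightarrow> complex) \<Rightarrow> 'z" where
  "qf scl n A x = (\<Sum>p<n. \<Sum>q<n. scl (cnj (x p) * x q) (A p q))"

definition vec :: "nat \<Rightarrow> nat \<Rightarrow> complex \<Rightarrow> nat \<Rightarrow> complex" where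
  "vec k l c = (\<lambda>p. (if p = k then 1 else 0) + c * (if p = l then 1 else 0))"

lemma sum_fun_apply: "(sum f A) x = sum (\<lambda>a. f a x) A"
  by (induct A rule: infinite_finite_induct) auto

locale amos = vector_space scl for scl :: "complex \<Rightarrow> 'z::ab_group_add \<Rightarrow> 'z" +
  fixes C :: "nat \<Rightarrow> (nat \<Rightarrow> nat \<Rightarrow> 'z) set"
  assumes mc: "matrix_cone scl C" and cp: "C_proper scl C"
begin

lemma scl_if: "scl (if P then c else 0) x = (if P then scl c x else 0)" by simp

lemma sum_delta2: "a < (n::nat) \<Longrightarrow> b < n \<Longrightarrow>
  (\<Sum>p<n. \<Sum>q<n. scl (if p = a \<and> q = b then c else 0) (A p q)) = scl c (A a b)"
proof -
  assume ab: "a < n" "b < n"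
  have i: "(\<Sum>q<n. scl (if p = a \<and> q = b then c else 0) (A p q)) = (if p = a then scl c (A a b) else 0)" for p
  proof (cases "p = a")
    case True
    have "(\<Sum>q<n. scl (if p = a \<and> q = b then c else 0) (A p q)) = (\<Sum>q<n. if q = b then scl c (A a b) else 0)"
      by (rule sum.cong) (auto simp: True)
    also have "\<dots> = scl c (A a b)" using ab(2) by simp
    finally show ?thesis using True by simp
  qed simp
  show ?thesis unfolding i using ab(1) by simp
qed

lemma qf_vec: assumes "k < n" "l < n"
  shows "qf scl n A (vec k l c) = A k k + scl c (A k l) + scl (cnj c) (A l k) + scl (c * cnj c) (A l l)"
proof -
  have e: "cnj (vec k l c p) * vec k l c q = (if p=k\<and>q=k then 1 else 0) + (if p=k\<and>q=l then c else 0)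
     + (if p=l \<and> q=k then cnj c else 0) + (if p=l\<and>q=l then c*cnj c else 0)" for p q
    by (auto simp: vec_def algebra_simps)
  show ?thesis
    unfolding qf_def e scale_left_distrib sum.distrib
    using assms by (simp add: sum_delta2)
qed


lemma half_half: "scl (1/2) x + scl (1/2) x = x"
proof -
  have "scl (1/2) x + scl (1/2) x = scl (1/2 + 1/2) x" by (rule scale_left_distrib[symmetric])
  then show ?thesis by simp
qed

lemma polarPQ: assumes "k < n" "l < n"
  shows "qf scl n A (vec k l 1) - A k k - A l l = A k l + A l k"
    "qf scl n A (vec k l \<i>) - A k k - A l l = scl \<i> (A k l) - scl \<i> (A l k)"
  using assms by (simp_all add: qf_vec)

lemma polar1: assumes "k < n" "l < n"
  shows "A k l = scl (1/2) (qf scl n A (vec k l 1) - A k k - A l l)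
     + scl \<i> (scl (-1/2) (qf scl n A (vec k l \<i>) - A k k - A l l))"
proof -
  have "scl \<i> (scl (-1/2) (scl \<i> (A k l) - scl \<i> (A l k))) = scl (1/2) (A k l) - scl (1/2) (A l k)"
    by (simp only: scale_right_diff_distrib scale_scale) simp
  then show ?thesis unfolding polarPQ[OF assms] scale_right_distrib
    by (simp add: half_half)
qed

lemma polar2: assumes "k < n" "l < n"
  shows "A l k = scl (1/2) (qf scl n A (vec k l 1) - A k k - A l l)
     + scl \<i> (scl (1/2) (qf scl n A (vec k l \<i>) - A k k - A l l))"
proof -
  have "scl \<i> (scl (1/2) (scl \<i> (A k l) - scl \<i> (A l k))) = scl (1/2) (A l k) - scl (1/2) (A k l)"
    by (simp only: scale_right_diff_distrib scale_scale) simp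
  then show ?thesis unfolding polarPQ[OF assms] scale_right_distrib
    by (simp add: half_half)
qed

lemma qf_diag: "k < n \<Longrightarrow> l < n \<Longrightarrow> qf scl n A (vec k l 0) = A k k"
  by (simp add: qf_vec)

end

lemma mscale_apply: "mscale scl c A i j = scl c (A i j)"
  by (simp add: mscale_def)

lemma vs_mscale: assumes "vector_space (scl :: complex \<Rightarrow> 'z::ab_group_add \<Rightarrow> 'z)"
  shows "vector_space (mscale scl)"
proof -
  interpret vector_space scl by fact
  show ?thesis
    by unfold_locales (simp_all add: mscale_def fun_eq_iff scale_right_distrib scale_left_distrib)
qed

lemma span_re_im:
  fixes s :: "complex \<Rightarrow> 'b::ab_group_add \<Rightarrow> 'b"
  assumes vs: "vector_space s" and R0: "0 \<in> R" and Radd: "\<And>a b. a\<in>R \<Longrightarrow> b\<in>R \<Longrightarrow> a+b \<in> R"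
    and Rsc: "\<And>t a. a\<in>R \<Longrightarrow> s (of_real t) a \<in> R" and v: "v \<in> module.span s R"
  shows "\<exists>a\<in>R. \<exists>b\<in>R. v = a + s \<i> b"
proof -
  interpret vector_space s by fact
  from v show ?thesis
  proof (induct rule: span_induct_alt)
    case base
    show ?case using R0 by (intro bexI[of _ 0]) auto
  next
    case (step c x y)
    then obtain a b where ab: "a \<in> R" "b \<in> R" "y = a + s \<i> b" by blast
    have c: "c = of_real (Re c) + \<i> * of_real (Im c)" by (simp add: complex_eq_iff)
    have "s c x = s (of_real (Re c)) x + s \<i> (s (of_real (Im c)) x)"
      by (subst c) (simp add: scale_left_distrib)
    then have "s c x + y = (s (of_real (Re c)) x + a) + s \<i> (s (of_real (Im c)) x + b)"
      using ab by (simp add: scale_right_distrib algebra_simps)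
    moreover have "s (of_real (Re c)) x + a \<in> R" "s (of_real (Im c)) x + b \<in> R"
      using step ab by (auto intro: Radd Rsc)
    ultimately show ?case by blast
  qed
qed

sublocale amos \<subseteq> M: vector_space "mscale scl"
  by (rule vs_mscale) unfold_locales

context amos begin

lemma Cn: assumes "n \<ge> 1"
  shows "C n \<subseteq> mats n" "a \<in> C n \<Longrightarrow> b \<in> C n \<Longrightarrow> a + b \<in> C n"
    "t \<ge> 0 \<Longrightarrow> a \<in> C n \<Longrightarrow> mscale scl (of_real t) a \<in> C n"
  using mc assms unfolding matrix_cone_def is_cone_def by blast+

lemma Ccong: "n \<ge> 1 \<Longrightarrow> k \<ge> 1 \<Longrightarrow> A \<in> C n \<Longrightarrow> matcong scl n k X A \<in> C k"
  using mc unfolding matrix_cone_def by blast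

lemma C1_zero: "0 \<in> C 1"
  using cp unfolding C_proper_def by blast

lemma Cn_zero: assumes "n \<ge> 1" shows "0 \<in> C n"
proof -
  have "matcong scl 1 n (\<lambda>_ _. 0) 0 \<in> C n" using Ccong[OF _ assms C1_zero] by simp
  moreover have "matcong scl 1 n (\<lambda>_ _. 0) 0 = 0" by (simp add: matcong_def fun_eq_iff)
  ultimately show ?thesis by simp
qed

lemma Zsa_iff: "z \<in> Zsa scl C n \<longleftrightarrow> mscale scl \<i> z \<in> C n \<and> mscale scl (-\<i>) z \<in> C n"
proof
  assume "z \<in> Zsa scl C n"
  then obtain a b where "a \<in> C n" "b \<in> C n" "z = mscale scl \<i> a" "z = mscale scl (-\<i>) b"
    unfolding Zsa_def by blast
  moreover have "mscale scl (-\<i>) (mscale scl \<i> a) = a" "mscale scl \<i> (mscale scl (-\<i>) b) = b"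
    by (simp_all add: mscale_def fun_eq_iff)
  ultimately show "mscale scl \<i> z \<in> C n \<and> mscale scl (-\<i>) z \<in> C n" by metis
next
  assume a: "mscale scl \<i> z \<in> C n \<and> mscale scl (-\<i>) z \<in> C n"
  have "z = mscale scl \<i> (mscale scl (-\<i>) z)" "z = mscale scl (-\<i>) (mscale scl \<i> z)"
    by (simp_all add: mscale_def fun_eq_iff)
  then show "z \<in> Zsa scl C n" using a unfolding Zsa_def by blast
qed

lemma Zsa_mats: assumes "n \<ge> 1" "z \<in> Zsa scl C n" shows "z \<in> mats n"
proof -
  have "mscale scl \<i> z \<in> mats n" using assms Zsa_iff Cn(1) by blast
  then show ?thesis unfolding mats_def mscale_def
    by auto
qed


lemma mscale_mscale: "mscale scl a (mscale scl b z) = mscale scl (a * b) z"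
  by (simp add: mscale_def)

lemma Zsa_add: "n \<ge> 1 \<Longrightarrow> a \<in> Zsa scl C n \<Longrightarrow> b \<in> Zsa scl C n \<Longrightarrow> a + b \<in> Zsa scl C n"
  unfolding Zsa_iff using Cn(2) by (metis M.scale_right_distrib)

lemma Zsa_real: assumes "n \<ge> 1" "a \<in> Zsa scl C n" shows "mscale scl (of_real t) a \<in> Zsa scl C n"
proof (cases "t \<ge> 0")
  case True
  have "mscale scl \<i> (mscale scl (of_real t) a) = mscale scl (of_real t) (mscale scl \<i> a)"
    "mscale scl (-\<i>) (mscale scl (of_real t) a) = mscale scl (of_real t) (mscale scl (-\<i>) a)"
    by (simp_all add: mscale_mscale mult.commute)
  then show ?thesis using assms True Cn(3) unfolding Zsa_iff by metis
next
  case False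
  have "mscale scl \<i> (mscale scl (of_real t) a) = mscale scl (of_real (-t)) (mscale scl (-\<i>) a)"
    "mscale scl (-\<i>) (mscale scl (of_real t) a) = mscale scl (of_real (-t)) (mscale scl \<i> a)"
    by (simp_all add: mscale_mscale mult.commute)
  moreover have "mscale scl (of_real (-t)) (mscale scl (-\<i>) a) \<in> C n"
    "mscale scl (of_real (-t)) (mscale scl \<i> a) \<in> C n"
  proof -
    have h1: "mscale scl \<i> a \<in> C n" "mscale scl (-\<i>) a \<in> C n" using assms(2) unfolding Zsa_iff by blast+
    have "0 \<le> -t" using False by simp
    then show "mscale scl (of_real (-t)) (mscale scl (-\<i>) a) \<in> C n"
      "mscale scl (of_real (-t)) (mscale scl \<i> a) \<in> C n"
      using Cn(3)[OF assms(1)] h1 by blast+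
  qed
  ultimately show ?thesis unfolding Zsa_iff by metis
qed

lemma Zsa_zero: "n \<ge> 1 \<Longrightarrow> 0 \<in> Zsa scl C n"
  unfolding Zsa_iff using Cn_zero by simp

lemma Zsa_neg: "n \<ge> 1 \<Longrightarrow> a \<in> Zsa scl C n \<Longrightarrow> - a \<in> Zsa scl C n"
  using Zsa_real[of n a "-1"] by simp

lemma matcong_mscale: "matcong scl n k X (mscale scl c A) = mscale scl c (matcong scl n k X A)"
  by (simp add: matcong_def mscale_def fun_eq_iff scale_sum_right mult.commute)

lemma Zsa_cong: "n \<ge> 1 \<Longrightarrow> k \<ge> 1 \<Longrightarrow> A \<in> Zsa scl C n \<Longrightarrow> matcong scl n k X A \<in> Zsa scl C k"
  unfolding Zsa_iff matcong_mscale[symmetric] using Ccong by blast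

lemma matcong_col: "matcong scl n 1 (\<lambda>p i. x p) A = entry1 (qf scl n A x)"
  by (simp add: matcong_def entry1_def qf_def fun_eq_iff)

lemma qf_mscale: "qf scl n (mscale scl c A) x = scl c (qf scl n A x)"
  by (simp add: qf_def mscale_def scale_sum_right mult.commute)

lemma qf_uminus: "qf scl n (- A) x = - qf scl n A x"
  by (simp add: qf_def sum_negf)

lemma mscale_entry1: "mscale scl c (entry1 v) = entry1 (scl c v)"
  by (simp add: mscale_def entry1_def fun_eq_iff)

lemma entry1_inj: "entry1 (a::'z) = entry1 b \<longleftrightarrow> a = b"
  by (auto simp: entry1_def fun_eq_iff)

lemma entry1_0: "entry1 (0::'z) = 0" by (simp add: entry1_def fun_eq_iff)
lemma entry1_uminus: "entry1 (- (v::'z)) = - entry1 v" by (rule ext)+ (simp add: entry1_def)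
lemma entry1_add: "entry1 ((a::'z) + b) = entry1 a + entry1 b" by (rule ext)+ (simp add: entry1_def)

lemma mats1: "(A::nat\<Rightarrow>nat\<Rightarrow>'z) \<in> mats 1 \<Longrightarrow> A = entry1 (A 0 0)"
  by (auto simp: mats_def entry1_def fun_eq_iff)

definition Vsa where "Vsa = {A 0 0 | A. A \<in> Zsa scl C 1}"

lemma Vsa_iff: "v \<in> Vsa \<longleftrightarrow> entry1 v \<in> Zsa scl C 1"
proof
  assume "v \<in> Vsa"
  then obtain A where "A \<in> Zsa scl C 1" "v = A 0 0" unfolding Vsa_def by blast
  then show "entry1 v \<in> Zsa scl C 1" using mats1 Zsa_mats by force
next
  assume "entry1 v \<in> Zsa scl C 1"
  then show "v \<in> Vsa" unfolding Vsa_def by (intro CollectI exI[of _ "entry1 v"]) (simp add: entry1_def)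
qed

lemma Vsa_iff2: "v \<in> Vsa \<longleftrightarrow> entry1 (scl \<i> v) \<in> C 1 \<and> entry1 (scl (-\<i>) v) \<in> C 1"
  unfolding Vsa_iff Zsa_iff mscale_entry1 ..

lemma qf_Vsa: "n \<ge> 1 \<Longrightarrow> z \<in> Zsa scl C n \<Longrightarrow> qf scl n z x \<in> Vsa"
  unfolding Vsa_iff matcong_col[symmetric] by (rule Zsa_cong) auto

lemma Vsa_add: "a \<in> Vsa \<Longrightarrow> b \<in> Vsa \<Longrightarrow> a + b \<in> Vsa"
  unfolding Vsa_iff entry1_add by (rule Zsa_add) auto

lemma Vsa_real: "a \<in> Vsa \<Longrightarrow> scl (of_real t) a \<in> Vsa"
  unfolding Vsa_iff mscale_entry1[symmetric] by (rule Zsa_real) auto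

lemma Vsa_zero: "0 \<in> Vsa"
  unfolding Vsa_iff entry1_0 by (rule Zsa_zero) auto

lemma Vsa_neg: "a \<in> Vsa \<Longrightarrow> - a \<in> Vsa"
  unfolding Vsa_iff entry1_uminus by (rule Zsa_neg) auto

lemma Vsa_diff: "a \<in> Vsa \<Longrightarrow> b \<in> Vsa \<Longrightarrow> a - b \<in> Vsa"
  using Vsa_add Vsa_neg by (metis diff_conv_add_uminus)

lemma Vsa_inter: assumes a: "a \<in> Vsa" and b: "b \<in> Vsa" and ab: "a = scl \<i> b" shows "a = 0"
proof -
  have 1: "entry1 a \<in> C 1" using b ab Vsa_iff2 by auto
  have "entry1 (- a) \<in> C 1" using b ab Vsa_iff2 by auto
  then have 2: "entry1 a \<in> uminus ` C 1" unfolding entry1_uminus by (metis image_eqI minus_minus)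
  have "entry1 a = mscale scl \<i> (entry1 (scl (-\<i>) a))" by (simp add: mscale_entry1)
  then have 3: "entry1 a \<in> mscale scl \<i> ` C 1" using a Vsa_iff2 by auto
  have "entry1 a = mscale scl (-\<i>) (entry1 (scl \<i> a))" by (simp add: mscale_entry1)
  then have 4: "entry1 a \<in> mscale scl (-\<i>) ` C 1" using a Vsa_iff2 by auto
  have "entry1 a = 0" using 1 2 3 4 cp unfolding C_proper_def by blast
  then show ?thesis using entry1_inj entry1_0 by metis
qed


lemma V_decomp: "v \<in> span Vsa \<Longrightarrow> \<exists>a\<in>Vsa. \<exists>b\<in>Vsa. v = a + scl \<i> b"
  by (rule span_re_im[of scl Vsa v]) (auto intro: Vsa_zero Vsa_add Vsa_real vector_space_axioms)

lemma reim_unique: assumes "a \<in> Vsa" "b \<in> Vsa" "a' \<in> Vsa" "b' \<in> Vsa"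
  and e: "a + scl \<i> b = a' + scl \<i> b'" shows "a = a'" "b = b'"
proof -
  have d: "a - a' = scl \<i> (b' - b)" using e by (simp add: scale_right_diff_distrib algebra_simps)
  have "a - a' = 0" by (rule Vsa_inter[OF Vsa_diff Vsa_diff]) (use assms d in auto)
  then show "a = a'" by simp
  with e have "scl \<i> b = scl \<i> b'" by simp
  then have "scl (-\<i>) (scl \<i> b) = scl (-\<i>) (scl \<i> b')" by simp
  then show "b = b'" by simp
qed

definition re where "re v = fst (SOME p. fst p \<in> Vsa \<and> snd p \<in> Vsa \<and> v = fst p + scl \<i> (snd p))"
definition im where "im v = snd (SOME p. fst p \<in> Vsa \<and> snd p \<in> Vsa \<and> v = fst p + scl \<i> (snd p))"

lemma reim: assumes "v \<in> span Vsa" shows "re v \<in> Vsa" "im v \<in> Vsa" "v = re v + scl \<i> (im v)"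
proof -
  from V_decomp[OF assms] obtain a b where "a \<in> Vsa" "b \<in> Vsa" "v = a + scl \<i> b" by blast
  then have "\<exists>p. fst p \<in> Vsa \<and> snd p \<in> Vsa \<and> v = fst p + scl \<i> (snd p)" by (intro exI[of _ "(a,b)"]) auto
  from someI_ex[OF this] show "re v \<in> Vsa" "im v \<in> Vsa" "v = re v + scl \<i> (im v)"
    unfolding re_def im_def by blast+
qed

lemma span_reim: "a \<in> Vsa \<Longrightarrow> b \<in> Vsa \<Longrightarrow> a + scl \<i> b \<in> span Vsa"
  by (intro span_add span_scale span_base)

lemma re_eq: assumes "a \<in> Vsa" "b \<in> Vsa" shows "re (a + scl \<i> b) = a" "im (a + scl \<i> b) = b"
  using reim_unique[OF reim(1,2)[OF span_reim[OF assms]] assms reim(3)[OF span_reim[OF assms], symmetric]]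
  by auto

definition s1 where "s1 v = re v + scl \<i> (- im v)"

lemma s1_eq: "a \<in> Vsa \<Longrightarrow> b \<in> Vsa \<Longrightarrow> s1 (a + scl \<i> b) = a + scl \<i> (- b)"
  by (simp add: s1_def re_eq)

lemma s1_V: "v \<in> span Vsa \<Longrightarrow> s1 v \<in> span Vsa"
  unfolding s1_def by (rule span_reim) (use reim Vsa_neg in auto)

lemma s1_s1: assumes "v \<in> span Vsa" shows "s1 (s1 v) = v"
proof -
  have "s1 (s1 v) = re v + scl \<i> (- (- im v))"
    unfolding s1_def[of v] by (rule s1_eq) (use reim[OF assms] Vsa_neg in auto)
  then show ?thesis using reim(3)[OF assms] by simp
qed

lemma s1_fix: "a \<in> Vsa \<Longrightarrow> s1 a = a"
  using s1_eq[of a 0] Vsa_zero by simp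

lemma s1_add: assumes "v \<in> span Vsa" "w \<in> span Vsa" shows "s1 (v + w) = s1 v + s1 w"
proof -
  have "v + w = (re v + re w) + scl \<i> (im v + im w)"
    using reim(3)[OF assms(1)] reim(3)[OF assms(2)] by (simp add: scale_right_distrib algebra_simps)
  then have "s1 (v + w) = (re v + re w) + scl \<i> (- (im v + im w))"
    using reim[OF assms(1)] reim[OF assms(2)] by (simp add: s1_eq Vsa_add)
  then show ?thesis unfolding s1_def by (simp add: scale_right_distrib algebra_simps)
qed

lemma scl_cx: "scl (of_real x + \<i> * of_real y) (a + scl \<i> b)
   = (scl (of_real x) a - scl (of_real y) b) + scl \<i> (scl (of_real y) a + scl (of_real x) b)"
  by (simp add: scale_left_distrib scale_right_distrib algebra_simps)

lemma s1_scale: assumes "v \<in> span Vsa" shows "s1 (scl c v) = scl (cnj c) (s1 v)"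
proof -
  define x where "x = Re c"
  define y where "y = Im c"
  have c: "c = of_real x + \<i> * of_real y" by (simp add: x_def y_def complex_eq_iff)
  have cc: "cnj c = of_real x + \<i> * of_real (-y)" by (simp add: x_def y_def complex_eq_iff)
  let ?a = "re v" and ?b = "im v"
  have ab: "?a \<in> Vsa" "?b \<in> Vsa" using reim[OF assms] by auto
  have "scl c v = (scl (of_real x) ?a - scl (of_real y) ?b) + scl \<i> (scl (of_real y) ?a + scl (of_real x) ?b)"
    by (subst reim(3)[OF assms], subst c, rule scl_cx)
  then have "s1 (scl c v) = (scl (of_real x) ?a - scl (of_real y) ?b) + scl \<i> (- (scl (of_real y) ?a + scl (of_real x) ?b))"
    using ab by (simp add: s1_eq Vsa_add Vsa_diff Vsa_real)
  moreover have "scl (cnj c) (s1 v) = (scl (of_real x) ?a - scl (of_real (-y)) (- ?b)) + scl \<i> (scl (of_real (-y)) ?a + scl (of_real x) (- ?b))"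
    unfolding s1_def cc by (rule scl_cx)
  moreover have "(scl (of_real x) ?a - scl (of_real y) ?b) + scl \<i> (- (scl (of_real y) ?a + scl (of_real x) ?b))
     = (scl (of_real x) ?a - scl (of_real (-y)) (- ?b)) + scl \<i> (scl (of_real (-y)) ?a + scl (of_real x) (- ?b))"
    by (simp add: algebra_simps)
  ultimately show ?thesis by metis
qed


lemma Vsa_half: "a \<in> Vsa \<Longrightarrow> scl (1/2) a \<in> Vsa" "a \<in> Vsa \<Longrightarrow> scl (-1/2) a \<in> Vsa"
  using Vsa_real[of a "1/2"] Vsa_real[of a "-1/2"] by simp_all

lemma Zsa_entry: assumes n: "n \<ge> 1" and z: "z \<in> Zsa scl C n" and kl: "k < n" "l < n"
  shows "z k l \<in> span Vsa" "s1 (z l k) = z k l"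
proof -
  define P where "P = qf scl n z (vec k l 1) - z k k - z l l"
  define Q where "Q = qf scl n z (vec k l \<i>) - z k k - z l l"
  have kk: "z k k \<in> Vsa" using qf_Vsa[OF n z, of "vec k l 0"] qf_diag[OF kl] by simp
  have ll: "z l l \<in> Vsa" using qf_Vsa[OF n z, of "vec l k 0"] qf_diag[OF kl(2,1)] by simp
  have PQ: "P \<in> Vsa" "Q \<in> Vsa" unfolding P_def Q_def using kk ll qf_Vsa[OF n z]
    by (auto intro!: Vsa_diff)
  define a where "a = scl (1/2) P"
  define b where "b = scl (-1/2) Q"
  have ab: "a \<in> Vsa" "b \<in> Vsa" unfolding a_def b_def using PQ Vsa_half by auto
  have 1: "z k l = a + scl \<i> b" unfolding a_def b_def P_def Q_def by (rule polar1[OF kl])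
  have "scl (1/2) Q = - b" unfolding b_def by simp
  then have 2: "z l k = a + scl \<i> (- b)" unfolding a_def using polar2[OF kl, of z] unfolding P_def Q_def
    by metis
  show "z k l \<in> span Vsa" unfolding 1 using ab by (rule span_reim)
  have "s1 (z l k) = a + scl \<i> (- (- b))" unfolding 2 by (rule s1_eq) (use ab Vsa_neg in auto)
  then show "s1 (z l k) = z k l" using 1 by simp
qed

definition star :: "nat \<Rightarrow> (nat \<Rightarrow> nat \<Rightarrow> 'z) \<Rightarrow> (nat \<Rightarrow> nat \<Rightarrow> 'z)" where
  "star n z = (\<lambda>k l. if k < n \<and> l < n then s1 (z l k) else 0)"

lemma Zsa_matsV: "n \<ge> 1 \<Longrightarrow> z \<in> Zsa scl C n \<Longrightarrow> z \<in> matsV n (span Vsa)"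
  unfolding matsV_def using Zsa_mats Zsa_entry by auto

lemma star_Zsa: assumes "n \<ge> 1" "z \<in> Zsa scl C n" shows "star n z = z"
proof (intro ext)
  fix k l
  show "star n z k l = z k l"
    using Zsa_entry[OF assms] Zsa_mats[OF assms] unfolding star_def mats_def by auto
qed

lemma subspace_matsV: "M.subspace (matsV n (span Vsa))"
  unfolding M.subspace_def matsV_def mats_def
  by (auto simp: mscale_def intro: span_add span_scale span_zero)

lemma span_Zsa_sub: "n \<ge> 1 \<Longrightarrow> M.span (Zsa scl C n) \<subseteq> matsV n (span Vsa)"
  by (rule M.span_minimal) (auto intro: Zsa_matsV subspace_matsV)


definition FF :: "nat \<Rightarrow> (nat \<Rightarrow> nat \<Rightarrow> complex) \<Rightarrow> 'z \<Rightarrow> (nat \<Rightarrow> nat \<Rightarrow> 'z)" where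
  "FF n f v = (\<lambda>i j. if i < n \<and> j < n then scl (f i j) v else 0)"

lemma FF_add: "FF n f v + FF n g v = FF n (\<lambda>i j. f i j + g i j) v"
  by (rule ext)+ (simp add: FF_def scale_left_distrib)
lemma FF_diff: "FF n f v - FF n g v = FF n (\<lambda>i j. f i j - g i j) v"
  by (rule ext)+ (simp add: FF_def scale_left_diff_distrib)
lemma FF_scale: "mscale scl c (FF n f v) = FF n (\<lambda>i j. c * f i j) v"
  by (rule ext)+ (simp add: FF_def mscale_def)

lemma rank1: "matcong scl 1 n (\<lambda>p j. x j) (entry1 v) = FF n (\<lambda>i j. cnj (x i) * x j) v"
  by (rule ext)+ (simp add: FF_def matcong_def entry1_def)

lemma rank1_Zsa: "n \<ge> 1 \<Longrightarrow> v \<in> Vsa \<Longrightarrow> FF n (\<lambda>i j. cnj (x i) * x j) v \<in> Zsa scl C n"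
  unfolding rank1[symmetric] Vsa_iff by (rule Zsa_cong) auto

definition Em :: "nat \<Rightarrow> nat \<Rightarrow> 'z \<Rightarrow> (nat \<Rightarrow> nat \<Rightarrow> 'z)" where
  "Em k l v = (\<lambda>i j. if i = k \<and> j = l then v else 0)"

lemma coef_id: "(if i = k \<and> j = l then 1 else 0) =
   1/2 * ((cnj (vec k l 1 i) * vec k l 1 j - cnj (vec k l 0 i) * vec k l 0 j) - cnj (vec l k 0 i) * vec l k 0 j)
   + \<i> * (-1/2 * ((cnj (vec k l \<i> i) * vec k l \<i> j - cnj (vec k l 0 i) * vec k l 0 j) - cnj (vec l k 0 i) * vec l k 0 j))"
  by (auto simp: vec_def field_simps)

lemma Em_span_Vsa: assumes n: "n \<ge> 1" and kl: "k < n" "l < n" and v: "v \<in> Vsa"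
  shows "Em k l v \<in> M.span (Zsa scl C n)"
proof -
  let ?R = "\<lambda>x. FF n (\<lambda>i j. cnj (x i) * x j) v"
  have "Em k l v = FF n (\<lambda>i j. if i = k \<and> j = l then 1 else 0) v"
    unfolding FF_def Em_def using kl by (intro ext) auto
  also have "\<dots> = FF n (\<lambda>i j. 1/2 * ((cnj (vec k l 1 i) * vec k l 1 j - cnj (vec k l 0 i) * vec k l 0 j) - cnj (vec l k 0 i) * vec l k 0 j)
   + \<i> * (-1/2 * ((cnj (vec k l \<i> i) * vec k l \<i> j - cnj (vec k l 0 i) * vec k l 0 j) - cnj (vec l k 0 i) * vec l k 0 j))) v"
    by (simp only: coef_id[symmetric])
  also have "\<dots> = mscale scl (1/2) (?R (vec k l 1) - ?R (vec k l 0) - ?R (vec l k 0))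
     + mscale scl \<i> (mscale scl (-1/2) (?R (vec k l \<i>) - ?R (vec k l 0) - ?R (vec l k 0)))"
    by (simp only: FF_add FF_diff FF_scale)
  also have "\<dots> \<in> M.span (Zsa scl C n)"
    by (intro M.span_add M.span_scale M.span_diff M.span_base rank1_Zsa n v)
  finally show ?thesis .
qed

lemma Em_span: assumes n: "n \<ge> 1" and kl: "k < n" "l < n" and v: "v \<in> span Vsa"
  shows "Em k l v \<in> M.span (Zsa scl C n)"
proof -
  have "Em k l v = Em k l (re v) + mscale scl \<i> (Em k l (im v))"
    by (subst reim(3)[OF v]) (simp add: Em_def mscale_def fun_eq_iff)
  then show ?thesis using reim[OF v] Em_span_Vsa[OF n kl]
    by (metis M.span_add M.span_scale)
qed

lemma sum_delta2': assumes "a < (n::nat)" "b < n"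
  shows "(\<Sum>p<n. \<Sum>q<n. if a = p \<and> b = q then (c::'z) else 0) = c"
proof -
  have "(\<Sum>q<n. if a = p \<and> b = q then (c::'z) else 0) = (if a = p then c else 0)" for p
  proof (cases "a = p")
    case True
    then show ?thesis using assms(2) by simp
  qed simp
  then show ?thesis using assms(1) by simp
qed

lemma matsV_sub: assumes n: "n \<ge> 1" shows "matsV n (span Vsa) \<subseteq> M.span (Zsa scl C n)"
proof
  fix z assume z: "z \<in> matsV n (span Vsa)"
  have "z = (\<Sum>k<n. \<Sum>l<n. Em k l (z k l))"
  proof (intro ext)
    fix i j
    show "z i j = (\<Sum>k<n. \<Sum>l<n. Em k l (z k l)) i j"
    proof (cases "i < n \<and> j < n")
      case True
      then show ?thesis unfolding sum_fun_apply Em_def using sum_delta2'[of i n j "z i j"]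
        by (simp cong: if_cong) 
    next
      case False
      then have "z i j = 0" using z unfolding matsV_def mats_def by auto
      moreover have "(\<Sum>k<n. \<Sum>l<n. Em k l (z k l)) i j = 0" unfolding sum_fun_apply Em_def
        using False by (intro sum.neutral ballI) auto
      ultimately show ?thesis by simp
    qed
  qed
  also have "\<dots> \<in> M.span (Zsa scl C n)"
    using z unfolding matsV_def by (intro M.span_sum Em_span n) auto
  finally show "z \<in> M.span (Zsa scl C n)" .
qed


lemma span_eq: "n \<ge> 1 \<Longrightarrow> M.span (Zsa scl C n) = matsV n (span Vsa)"
  using span_Zsa_sub matsV_sub by blast

lemma mat_decomp: assumes n: "n \<ge> 1" and z: "z \<in> matsV n (span Vsa)"
  shows "\<exists>h\<in>Zsa scl C n. \<exists>k\<in>Zsa scl C n. z = h + mscale scl \<i> k"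
  by (rule span_re_im[of "mscale scl"]) (use n z span_eq[OF n] in \<open>auto intro: M.vector_space_axioms Zsa_zero Zsa_add Zsa_real\<close>)

lemma star_conj: "is_conj_inv scl n (span Vsa) (star n)"
  unfolding is_conj_inv_def
proof (intro conjI ballI allI)
  fix z assume z: "z \<in> matsV n (span Vsa)"
  then show "star n z \<in> matsV n (span Vsa)"
    unfolding matsV_def mats_def star_def by (auto intro: s1_V)
  show "star n (star n z) = z"
  proof (intro ext)
    fix k l show "star n (star n z) k l = z k l"
      using z unfolding matsV_def mats_def star_def by (auto simp: s1_s1)
  qed
  fix c show "star n (mscale scl c z) = mscale scl (cnj c) (star n z)"
    using z unfolding matsV_def mats_def star_def by (intro ext) (auto simp: mscale_def s1_scale)
next
  fix z w assume z: "z \<in> matsV n (span Vsa)" and w: "w \<in> matsV n (span Vsa)"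
  then show "star n (z + w) = star n z + star n w"
    unfolding matsV_def mats_def star_def by (intro ext) (auto simp: s1_add)
qed

lemma star_fix: "n \<ge> 1 \<Longrightarrow> z \<in> Zsa scl C n \<Longrightarrow> star n z = z"
  by (rule star_Zsa)

lemma conj_decomp: assumes n: "n \<ge> 1" and g: "is_conj_inv scl n (span Vsa) g"
  and fx: "\<forall>z\<in>Zsa scl C n. g z = z" and h: "h \<in> Zsa scl C n" and k: "k \<in> Zsa scl C n"
  shows "g (h + mscale scl \<i> k) = h + mscale scl (-\<i>) k"
proof -
  have hm: "h \<in> matsV n (span Vsa)" and km: "k \<in> matsV n (span Vsa)" using Zsa_matsV n h k by auto
  have ikm: "mscale scl \<i> k \<in> matsV n (span Vsa)" using km subspace_matsV M.subspace_scale by blast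
  have "g (h + mscale scl \<i> k) = g h + g (mscale scl \<i> k)" using g hm ikm unfolding is_conj_inv_def by blast
  also have "g (mscale scl \<i> k) = mscale scl (cnj \<i>) (g k)" using g km unfolding is_conj_inv_def by blast
  finally have "g (h + mscale scl \<i> k) = g h + mscale scl (cnj \<i>) (g k)" .
  then show ?thesis using fx h k by (metis complex_cnj_i)
qed

lemma half_M: "mscale scl (1/2) (h + h) = h"
proof -
  have "mscale scl (1/2) (h + h) = mscale scl (1/2 + 1/2) h"
    by (simp only: M.scale_right_distrib M.scale_left_distrib)
  then show ?thesis by simp
qed

lemma part3: assumes n: "n \<ge> 1" and z: "z \<in> matsV n (span Vsa)"
  shows "z \<in> C n \<longleftrightarrow> mscale scl (1/2) (z + star n z) \<in> Zplus scl C n"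
proof -
  obtain h k where h: "h \<in> Zsa scl C n" and k: "k \<in> Zsa scl C n" and zd: "z = h + mscale scl \<i> k"
    using mat_decomp[OF n z] by blast
  have sz: "star n z = h + mscale scl (-\<i>) k"
    unfolding zd by (rule conj_decomp[OF n star_conj _ h k]) (use star_fix n in auto)
  have "z + star n z = (h + mscale scl \<i> k) + (h + mscale scl (-\<i>) k)"
    by (subst sz) (subst zd, rule refl)
  then have "z + star n z = h + h" by (simp add: M.scale_minus_left)
  then have re: "mscale scl (1/2) (z + star n z) = h" by (simp add: half_M)
  have k1: "mscale scl \<i> k \<in> C n" and k2: "mscale scl (-\<i>) k \<in> C n" using k Zsa_iff by auto
  have "z \<in> C n \<longleftrightarrow> h \<in> C n"
  proof
    assume "z \<in> C n"
    moreover have "z + mscale scl (-\<i>) k = h" unfolding zd by simp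
    ultimately show "h \<in> C n" using Cn(2)[OF n _ k2] by metis
  next
    assume "h \<in> C n" then show "z \<in> C n" unfolding zd using Cn(2)[OF n _ k1] by blast
  qed
  then show ?thesis unfolding re Zplus_def using h by blast
qed

lemma part4: assumes n: "n \<ge> 1" shows "Zplus scl C n \<inter> uminus ` Zplus scl C n = {0}"
proof
  show "{0} \<subseteq> Zplus scl C n \<inter> uminus ` Zplus scl C n"
    using Zsa_zero[OF n] Cn_zero[OF n] unfolding Zplus_def by (auto intro: image_eqI[of 0 _ 0])
next
  show "Zplus scl C n \<inter> uminus ` Zplus scl C n \<subseteq> {0}"
  proof
    fix z assume "z \<in> Zplus scl C n \<inter> uminus ` Zplus scl C n"
    then obtain w where zP: "z \<in> Zplus scl C n" and wP: "w \<in> Zplus scl C n" and zw: "z = - w" by blast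
    have zC: "z \<in> C n" and zs: "z \<in> Zsa scl C n" using zP unfolding Zplus_def by auto
    have nzC: "- z \<in> C n" using wP zw unfolding Zplus_def by auto
    have iz: "mscale scl \<i> z \<in> C n" "mscale scl (-\<i>) z \<in> C n" using zs Zsa_iff by auto
    have qf0: "qf scl n z x = 0" for x
    proof -
      have e: "entry1 (qf scl n A x) \<in> C 1" if "A \<in> C n" for A
        using Ccong[OF n _ that, of 1 "\<lambda>p i. x p"] matcong_col by simp
      have 1: "entry1 (qf scl n z x) \<in> C 1" using e zC .
      have "entry1 (qf scl n z x) = - entry1 (qf scl n (- z) x)" by (simp add: qf_uminus entry1_uminus)
      then have 2: "entry1 (qf scl n z x) \<in> uminus ` C 1" using e[OF nzC] by blast
      have "entry1 (qf scl n z x) = mscale scl \<i> (entry1 (qf scl n (mscale scl (-\<i>) z) x))"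
        by (simp only: qf_mscale mscale_entry1 scale_scale) simp
      then have 3: "entry1 (qf scl n z x) \<in> mscale scl \<i> ` C 1" using e[OF iz(2)] by blast
      have "entry1 (qf scl n z x) = mscale scl (-\<i>) (entry1 (qf scl n (mscale scl \<i> z) x))"
        by (simp only: qf_mscale mscale_entry1 scale_scale) simp
      then have 4: "entry1 (qf scl n z x) \<in> mscale scl (-\<i>) ` C 1" using e[OF iz(1)] by blast
      have "entry1 (qf scl n z x) = 0" using 1 2 3 4 cp unfolding C_proper_def by blast
      then show ?thesis using entry1_inj entry1_0 by metis
    qed
    have zm: "z \<in> mats n" using Zsa_mats[OF n zs] .
    have "z = 0"
    proof (intro ext)
      fix k l show "z k l = 0 k l"
      proof (cases "k < n \<and> l < n")
        case True
        then have "z k k = 0" "z l l = 0" using qf_diag[of k n l z] qf_diag[of l n k z] qf0 by auto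
        then show ?thesis using polar1[of k n l z] True qf0 by simp
      next
        case False then show ?thesis using zm unfolding mats_def by auto
      qed
    qed
    then show "z \<in> {0}" by simp
  qed
qed

end

theorem lemma2p6:
  fixes scl :: "complex \<Rightarrow> 'z::ab_group_add \<Rightarrow> 'z"
    and C :: "nat \<Rightarrow> (nat \<Rightarrow> nat \<Rightarrow> 'z) set"
  assumes "accretive_mos scl C"
  shows "\<exists>star :: nat \<Rightarrow> (nat \<Rightarrow> nat \<Rightarrow> 'z) \<Rightarrow> (nat \<Rightarrow> nat \<Rightarrow> 'z). \<forall>n\<ge>1.
     module.span (mscale scl) (Zsa scl C n) = matsV n (Vspace scl C) \<and>
     is_conj_inv scl n (Vspace scl C) (star n) \<and>
     (\<forall>z\<in>Zsa scl C n. star n z = z) \<and>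
     (\<forall>g. is_conj_inv scl n (Vspace scl C) g \<and> (\<forall>z\<in>Zsa scl C n. g z = z)
          \<longrightarrow> (\<forall>z\<in>matsV n (Vspace scl C). g z = star n z)) \<and>
     (\<forall>z\<in>matsV n (Vspace scl C).
          star n z = (\<lambda>k l. if k < n \<and> l < n then star 1 (entry1 (z l k)) 0 0 else 0)) \<and>
     (\<forall>z\<in>matsV n (Vspace scl C).
          z \<in> C n \<longleftrightarrow> mscale scl (1/2) (z + star n z) \<in> Zplus scl C n) \<and>
     Zplus scl C n \<inter> uminus ` Zplus scl C n = {0}"
proof -
  have "amos scl C" using assms unfolding accretive_mos_def amos_def amos_axioms_def by auto
  then interpret amos scl C .
  have V: "Vspace scl C = span Vsa" by (simp add: Vspace_def Vsa_def)
  show ?thesis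
  proof (intro exI[of _ star] allI impI conjI ballI)
    fix n :: nat assume n: "n \<ge> 1"
    show "module.span (mscale scl) (Zsa scl C n) = matsV n (Vspace scl C)" unfolding V by (rule span_eq[OF n])
    show "is_conj_inv scl n (Vspace scl C) (star n)" unfolding V by (rule star_conj)
    show "star n z = z" if "z \<in> Zsa scl C n" for z using star_fix[OF n that] .
    show "Zplus scl C n \<inter> uminus ` Zplus scl C n = {0}" by (rule part4[OF n])
    fix z assume z: "z \<in> matsV n (Vspace scl C)"
    show "star n z = (\<lambda>k l. if k < n \<and> l < n then star 1 (entry1 (z l k)) 0 0 else 0)"
    proof -
      have e: "star 1 (entry1 w) 0 0 = s1 w" for w by (simp add: star_def entry1_def)
      show ?thesis unfolding e star_def[of n z] ..
    qed
    show "z \<in> C n \<longleftrightarrow> mscale scl (1/2) (z + star n z) \<in> Zplus scl C n"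
      using part3[OF n] z unfolding V by blast
  next
    fix n :: nat and g z assume n: "n \<ge> 1"
      and g: "is_conj_inv scl n (Vspace scl C) g \<and> (\<forall>z\<in>Zsa scl C n. g z = z)"
      and z: "z \<in> matsV n (Vspace scl C)"
    obtain h k where h: "h \<in> Zsa scl C n" and k: "k \<in> Zsa scl C n" and zd: "z = h + mscale scl \<i> k"
      using mat_decomp[OF n] z unfolding V by blast
    have "g z = h + mscale scl (-\<i>) k" unfolding zd using g h k conj_decomp[OF n] unfolding V by blast
    moreover have "star n z = h + mscale scl (-\<i>) k" unfolding zd
      by (rule conj_decomp[OF n star_conj _ h k]) (use star_fix n in auto)
    ultimately show "g z = star n z" by simp
  qed
qed

end
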